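(* Let $G$ be a graph on vertex set $[m]$, and let $k\ge1$. Let $y^0,\bar y^0,y^1,\bar y^1,\dots,y^{2k},\bar y^{2k}\in\mathrm{Stable}(G)$ be $4k+2$ pairwise distinct vectors satisfying $$y^i+\bar y^i=y^0+\bar y^0\quad\text{for all } i\in\{0,\dots,2k\}.$$ Define $I,J,j_0,U_i,S(i,j,t),y^*(S),\bar y^*(S)$ as in the context. Then for all $0\le i<j<t\le 2k$, both $y^*(S(i,j,t))$ and $\bar y^*(S(i,j,t))$ belong to $\mathrm{Stable}(G)$.
   Context: **Graph polytope.** For a graph $G=(V,E)$, $\mathrm{Stable}(G)=\{x\in\{0,1\}^V: x_u+x_v\le1 \text{ for every edge }\{u,v\}\in E\}$. **Index sets.** - $I=\{i\in[m]: y^0_i=\bar y^0_i\}$ and $J=[m]\setminus I=\{j: y^0_j+\bar y^0_j=1\}$. The set $J$ is nonempty. - Fix any $j_0\in J$. - For $i\in\{0,\dots,2k\}$, let $U_i=\{j\in J: y^i_j=1\}$ if $y^i_{j_0}=1$, and $U_i=\{j\in J:\bar y^i_j=1\}$ otherwise. - Let $\bar U_i=J\setminus U_i$. - For $0\le i<j<t\le2k$, let $S(i,j,t)=U_i\,\triangle\,U_j\,\triangle\,U_t$, where $\triangle$ is symmetric difference. **The vectors $y^*(S)$ and $\bar y^*(S)$.** For $S\subseteq J$: - $y^*(S)\in\{0,1\}^m$ has coordinate $y^0_p$ for $p\in I$, $1$ for $p\in S$, and $0$ for $p\in J\setminus S$; - $\bar y^*(S)$ has coordinate $y^0_p$ for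 $p\in I$, $0$ for $p\in S$, and $1$ for $p\in J\setminus S$. *)

theory Defs
  imports Main
begin

definition is_graph :: "nat \<Rightarrow> nat set set \<Rightarrow> bool" where
  "is_graph m E \<longleftrightarrow> (\<forall>e\<in>E. \<exists>u v. u \<noteq> v \<and> u \<in> {1..m} \<and> v \<in> {1..m} \<and> e = {u, v})"

definition Stable :: "nat \<Rightarrow> nat set set \<Rightarrow> (nat \<Rightarrow> nat) set" where
  "Stable m E = {x. (\<forall>p. p \<notin> {1..m} \<longrightarrow> x p = 0) \<and> (\<forall>p\<in>{1..m}. x p \<in> {0, 1})
                  \<and> (\<forall>u v. {u, v} \<in> E \<longrightarrow> x u + x v \<le> 1)}"

definition Iset :: "nat \<Rightarrow> (nat \<Rightarrow> nat) \<Rightarrow> (nat \<Rightarrow> nat) \<Rightarrow> nat set" where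
  "Iset m y0 yb0 = {p \<in> {1..m}. y0 p = yb0 p}"

definition Jset :: "nat \<Rightarrow> (nat \<Rightarrow> nat) \<Rightarrow> (nat \<Rightarrow> nat) \<Rightarrow> nat set" where
  "Jset m y0 yb0 = {1..m} - Iset m y0 yb0"

definition Uset :: "nat set \<Rightarrow> nat \<Rightarrow> (nat \<Rightarrow> nat) \<Rightarrow> (nat \<Rightarrow> nat) \<Rightarrow> nat set" where
  "Uset J j0 y yb = (if y j0 = 1 then {j \<in> J. y j = 1} else {j \<in> J. yb j = 1})"

definition symdiff :: "'a set \<Rightarrow> 'a set \<Rightarrow> 'a set" where
  "symdiff A B = (A - B) \<union> (B - A)"

definition ystar :: "nat set \<Rightarrow> nat set \<Rightarrow> (nat \<Rightarrow> nat) \<Rightarrow> nat set \<Rightarrow> (nat \<Rightarrow> nat)" where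
  "ystar I J y0 S = (\<lambda>p. if p \<in> I then y0 p else if p \<in> S \<inter> J then 1 else 0)"

definition ybstar :: "nat set \<Rightarrow> nat set \<Rightarrow> (nat \<Rightarrow> nat) \<Rightarrow> nat set \<Rightarrow> (nat \<Rightarrow> nat)" where
  "ybstar I J y0 S = (\<lambda>p. if p \<in> I then y0 p else if p \<in> J - S then 1 else 0)"

end

theory Submission
  imports Defs
begin

lemma U_xor:
  assumes a: "a \<in> Stable m E" and b: "b \<in> Stable m E"
    and s: "\<forall>p. a p + b p = y0 p + yb0 p"
    and y0: "y0 \<in> Stable m E" and yb0: "yb0 \<in> Stable m E"
    and u: "u \<in> Jset m y0 yb0" and v: "v \<in> Jset m y0 yb0" and e: "{u,v} \<in> E"
  shows "(u \<in> Uset (Jset m y0 yb0) j0 a b) \<noteq> (v \<in> Uset (Jset m y0 yb0) j0 a b)"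
proof -
  have um: "u \<in> {1..m}" "y0 u \<noteq> yb0 u" using u by (auto simp: Jset_def Iset_def)
  have vm: "v \<in> {1..m}" "y0 v \<noteq> yb0 v" using v by (auto simp: Jset_def Iset_def)
  have "y0 u \<in> {0,1}" "yb0 u \<in> {0,1}" "y0 v \<in> {0,1}" "yb0 v \<in> {0,1}"
    using y0 yb0 um vm by (auto simp: Stable_def)
  with um vm have su: "a u + b u = 1" and sv: "a v + b v = 1" using s by auto
  have "a u + a v \<le> 1" "b u + b v \<le> 1" using a b e by (auto simp: Stable_def)
  have uJ: "u \<in> Jset m y0 yb0" "v \<in> Jset m y0 yb0" using u v .
  show ?thesis
  proof (cases "a j0 = 1")
    case True
    then show ?thesis unfolding Uset_def using su sv \<open>a u + a v \<le> 1\<close> \<open>b u + b v \<le> 1\<close> uJ by auto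
  next
    case False
    then show ?thesis unfolding Uset_def using su sv \<open>a u + a v \<le> 1\<close> \<open>b u + b v \<le> 1\<close> uJ by auto
  qed
qed

lemma I_J:
  assumes y0: "y0 \<in> Stable m E" and yb0: "yb0 \<in> Stable m E"
    and u: "u \<in> Iset m y0 yb0" and v: "v \<in> Jset m y0 yb0" and e: "{u,v} \<in> E"
  shows "y0 u = 0"
proof (rule ccontr)
  assume h: "y0 u \<noteq> 0"
  have um: "u \<in> {1..m}" "y0 u = yb0 u" using u by (auto simp: Iset_def)
  have vm: "v \<in> {1..m}" "y0 v \<noteq> yb0 v" using v by (auto simp: Jset_def Iset_def)
  have "y0 u + y0 v \<le> 1" "yb0 u + yb0 v \<le> 1" using y0 yb0 e by (auto simp: Stable_def)
  with h um vm show False by simp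
qed

lemma IJ_sub: "Iset m y0 yb0 \<subseteq> {1..m}" "Jset m y0 yb0 \<subseteq> {1..m}"
  "Iset m y0 yb0 \<inter> Jset m y0 yb0 = {}" "p \<in> {1..m} \<Longrightarrow> p \<notin> Iset m y0 yb0 \<Longrightarrow> p \<in> Jset m y0 yb0"
  by (auto simp: Iset_def Jset_def)

lemma main_stable:
  assumes y0: "y0 \<in> Stable m E" and yb0: "yb0 \<in> Stable m E"
    and X: "\<And>u v. u \<in> Jset m y0 yb0 \<Longrightarrow> v \<in> Jset m y0 yb0 \<Longrightarrow> {u,v} \<in> E \<Longrightarrow>
          (u \<in> A) \<noteq> (v \<in> A) \<and> (u \<in> B) \<noteq> (v \<in> B) \<and> (u \<in> C) \<noteq> (v \<in> C)"
    and S: "S = symdiff (symdiff A B) C"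
  shows "ystar (Iset m y0 yb0) (Jset m y0 yb0) y0 S \<in> Stable m E \<and>
         ybstar (Iset m y0 yb0) (Jset m y0 yb0) y0 S \<in> Stable m E"
proof -
  let ?I = "Iset m y0 yb0" and ?J = "Jset m y0 yb0"
  have v01: "\<forall>p\<in>{1..m}. y0 p \<in> {0,1}" using y0 by (auto simp: Stable_def)
  have edge: "(u \<in> S) \<noteq> (v \<in> S)" if "u \<in> ?J" "v \<in> ?J" "{u,v} \<in> E" for u v
    using X[OF that] S by (auto simp: symdiff_def)
  have edge2: "(u \<in> ?J \<and> v \<in> ?J \<and> (u \<in> S) \<noteq> (v \<in> S)) \<or>
     (u \<in> ?I \<and> v \<in> ?I) \<or> (u \<in> ?I \<and> y0 u = 0) \<or> (v \<in> ?I \<and> y0 v = 0) \<or>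
     u \<notin> {1..m} \<or> v \<notin> {1..m}" if e: "{u,v} \<in> E" for u v
  proof -
    have e': "{v,u} \<in> E" using e by (simp add: insert_commute)
    show ?thesis
    proof (cases "u \<in> {1..m} \<and> v \<in> {1..m}")
      case False then show ?thesis by blast
    next
      case True
      then have uu: "u \<in> ?I \<or> u \<in> ?J" and vv: "v \<in> ?I \<or> v \<in> ?J"
        using IJ_sub(4)[of u m y0 yb0] IJ_sub(4)[of v m y0 yb0] by blast+
      show ?thesis
      proof (cases "u \<in> ?J \<and> v \<in> ?J")
        case True then show ?thesis using edge[OF _ _ e] by blast
      next
        case False
        show ?thesis
        proof (cases "u \<in> ?I \<and> v \<in> ?I")
          case True then show ?thesis by blast
        next
          case F2: False
          from uu vv False F2 have "(u \<in> ?I \<and> v \<in> ?J) \<or> (v \<in> ?I \<and> u \<in> ?J)" by blast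
          then show ?thesis
          proof
            assume "u \<in> ?I \<and> v \<in> ?J"
            then show ?thesis using I_J[OF y0 yb0 _ _ e] by blast
          next
            assume "v \<in> ?I \<and> u \<in> ?J"
            then show ?thesis using I_J[OF y0 yb0 _ _ e'] by blast
          qed
        qed
      qed
    qed
  qed
  have y0e: "y0 u + y0 v \<le> 1" if "{u,v} \<in> E" for u v using y0 that by (auto simp: Stable_def)
  show ?thesis
    unfolding Stable_def
  proof (intro conjI CollectI allI impI ballI)
    fix p assume "p \<notin> {1..m}"
    then show "ystar ?I ?J y0 S p = 0" "ybstar ?I ?J y0 S p = 0"
      using IJ_sub(1,2)[of m y0 yb0] by (auto simp: ystar_def ybstar_def)
  next
    fix p assume "p \<in> {1..m}"
    then show "ystar ?I ?J y0 S p \<in> {0,1}" "ybstar ?I ?J y0 S p \<in> {0,1}"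
      using v01 by (auto simp: ystar_def ybstar_def)
  next
    fix u v assume e: "{u,v} \<in> E"
    have d: "?I \<inter> ?J = {}" by (rule IJ_sub(3))
    have ui: "u \<notin> {1..m} \<Longrightarrow> u \<notin> ?I \<and> u \<notin> ?J" "v \<notin> {1..m} \<Longrightarrow> v \<notin> ?I \<and> v \<notin> ?J"
      using IJ_sub(1,2)[of m y0 yb0] by auto
    have yI: "y0 p \<le> 1" if "p \<in> ?I" for p using v01 IJ_sub(1)[of m y0 yb0] that by fastforce
    have dI: "p \<in> ?I \<Longrightarrow> p \<notin> ?J" for p using d by blast
    have "ystar ?I ?J y0 S u + ystar ?I ?J y0 S v \<le> 1 \<and>
      ybstar ?I ?J y0 S u + ybstar ?I ?J y0 S v \<le> 1"
      using edge2[OF e]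
    proof (elim disjE conjE)
      assume "u \<in> ?J" "v \<in> ?J" "(u \<in> S) \<noteq> (v \<in> S)"
      then show ?thesis using d by (auto simp: ystar_def ybstar_def)
    next
      assume "u \<in> ?I" "v \<in> ?I" then show ?thesis using y0e[OF e] by (simp add: ystar_def ybstar_def)
    next
      assume "u \<in> ?I" "y0 u = 0" then show ?thesis using yI[of v] dI[of v]
        by (simp add: ystar_def ybstar_def)
    next
      assume "v \<in> ?I" "y0 v = 0" then show ?thesis using yI[of u] dI[of u]
        by (simp add: ystar_def ybstar_def)
    next
      assume "u \<notin> {1..m}" then show ?thesis using ui(1) yI[of v] dI[of v]
        by (simp add: ystar_def ybstar_def)
    next
      assume "v \<notin> {1..m}" then show ?thesis using ui(2) yI[of u] dI[of u]
        by (simp add: ystar_def ybstar_def)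
    qed
    then show "ystar ?I ?J y0 S u + ystar ?I ?J y0 S v \<le> 1"
      "ybstar ?I ?J y0 S u + ybstar ?I ?J y0 S v \<le> 1" by auto
  qed
qed

theorem lemma1:
  fixes m k :: nat and E :: "nat set set"
    and y yb :: "nat \<Rightarrow> nat \<Rightarrow> nat" and j0 :: nat
  assumes "is_graph m E"
    and "k \<ge> 1"
    and "\<forall>i\<le>2*k. y i \<in> Stable m E \<and> yb i \<in> Stable m E"
    and "\<forall>i\<le>2*k. \<forall>j\<le>2*k. i \<noteq> j \<longrightarrow> y i \<noteq> y j \<and> yb i \<noteq> yb j"
    and "\<forall>i\<le>2*k. \<forall>j\<le>2*k. y i \<noteq> yb j"
    and "\<forall>i\<le>2*k. \<forall>p. y i p + yb i p = y 0 p + yb 0 p"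
    and "j0 \<in> Jset m (y 0) (yb 0)"
  shows "\<forall>i j t. i < j \<and> j < t \<and> t \<le> 2*k \<longrightarrow>
     (let I = Iset m (y 0) (yb 0); J = Jset m (y 0) (yb 0);
          U = (\<lambda>r. Uset J j0 (y r) (yb r));
          S = symdiff (symdiff (U i) (U j)) (U t)
      in ystar I J (y 0) S \<in> Stable m E \<and> ybstar I J (y 0) S \<in> Stable m E)"
proof (intro allI impI)
  fix i j t assume h: "i < j \<and> j < t \<and> t \<le> 2*k"
  have st: "y r \<in> Stable m E" "yb r \<in> Stable m E" if "r \<le> 2*k" for r
    using assms(3) that by auto
  have y0: "y 0 \<in> Stable m E" "yb 0 \<in> Stable m E" using st[of 0] by auto
  have X: "(u \<in> Uset (Jset m (y 0) (yb 0)) j0 (y r) (yb r)) \<noteq> (v \<in> Uset (Jset m (y 0) (yb 0)) j0 (y r) (yb r))"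
    if "r \<le> 2*k" "u \<in> Jset m (y 0) (yb 0)" "v \<in> Jset m (y 0) (yb 0)" "{u,v} \<in> E" for r u v
  proof -
    have "\<forall>p. y r p + yb r p = y 0 p + yb 0 p" using assms(6) that(1) by blast
    then show ?thesis by (rule U_xor[OF st(1)[OF that(1)] st(2)[OF that(1)] _ y0 that(2-4)])
  qed
  show "let I = Iset m (y 0) (yb 0); J = Jset m (y 0) (yb 0);
          U = (\<lambda>r. Uset J j0 (y r) (yb r));
          S = symdiff (symdiff (U i) (U j)) (U t)
      in ystar I J (y 0) S \<in> Stable m E \<and> ybstar I J (y 0) S \<in> Stable m E"
    unfolding Let_def
  proof (rule main_stable[OF y0 _ refl])
    fix u v assume a: "u \<in> Jset m (y 0) (yb 0)" "v \<in> Jset m (y 0) (yb 0)" "{u, v} \<in> E"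
    have "i \<le> 2*k" "j \<le> 2*k" "t \<le> 2*k" using h by auto
    then show "(u \<in> Uset (Jset m (y 0) (yb 0)) j0 (y i) (yb i)) \<noteq> (v \<in> Uset (Jset m (y 0) (yb 0)) j0 (y i) (yb i)) \<and>
      (u \<in> Uset (Jset m (y 0) (yb 0)) j0 (y j) (yb j)) \<noteq> (v \<in> Uset (Jset m (y 0) (yb 0)) j0 (y j) (yb j)) \<and>
      (u \<in> Uset (Jset m (y 0) (yb 0)) j0 (y t) (yb t)) \<noteq> (v \<in> Uset (Jset m (y 0) (yb 0)) j0 (y t) (yb t))"
      using X[OF _ a] by blast
  qed
qed

end
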